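(* For $n\ge1$ and $k\ge1$, let $\overline{\sigma}^k_n=(\sigma^k_n,n)$ be the sequence $\sigma^k_n$ followed by one additional term $n$ (this sequence has $k^nn!$ terms), and let $\mathrm{avg}(n,k)$ be the arithmetic mean of its terms. Then $$\mathrm{avg}(n,k)=\sum_{j=0}^{n-1}\frac{1}{k^j\,j!},$$ and consequently $\mathrm{avg}(n,k)<e^{1/k}$.
   Context: The sequence $\sigma^k_n$ of positive integers is defined recursively by $\sigma^k_1=1^{k-1}$ (the value $1$ repeated $k-1$ times; empty if $k=1$) and, for $n>1$, $\sigma^k_n=(\sigma^k_{n-1},n)^{kn-1},\sigma^k_{n-1}$, i.e. $kn-1$ copies of the block "$\sigma^k_{n-1}$ followed by $n$", followed by one more copy of $\sigma^k_{n-1}$. *)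

theory Defs
  imports "HOL-Analysis.Analysis"
begin

text \<open>The sequence sigma^k_n as a list of positive integers (defined for n \<ge> 1;
  the value at n = 0 is an irrelevant placeholder).\<close>
fun sigma :: "nat \<Rightarrow> nat \<Rightarrow> nat list" where
  "sigma k 0 = []"
| "sigma k (Suc 0) = replicate (k - 1) 1"
| "sigma k (Suc (Suc m)) =
     concat (replicate (k * Suc (Suc m) - 1) (sigma k (Suc m) @ [Suc (Suc m)])) @ sigma k (Suc m)"

definition sigma_bar :: "nat \<Rightarrow> nat \<Rightarrow> nat list" where
  "sigma_bar k n = sigma k n @ [n]"

definition avg :: "nat \<Rightarrow> nat \<Rightarrow> real" where
  "avg n k = real (sum_list (sigma_bar k n)) / real (length (sigma_bar k n))"

end

theory Submission
  imports Defs
begin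

lemma len_step: "k \<ge> 1 \<Longrightarrow> length (sigma k (Suc (Suc m))) + 1 = k * Suc (Suc m) * (length (sigma k (Suc m)) + 1)"
proof -
  assume k: "k \<ge> 1"
  have p: "k * Suc (Suc m) \<ge> 1" using k by simp
  have "length (sigma k (Suc (Suc m))) + 1 = (k * Suc (Suc m) - 1) * (length (sigma k (Suc m)) + 1) + (length (sigma k (Suc m)) + 1)"
    by (simp add: length_concat sum_list_replicate)
  also have "\<dots> = k * Suc (Suc m) * (length (sigma k (Suc m)) + 1)"
    using p by (metis add.commute mult_eq_if le_add_diff_inverse2 mult.left_neutral add_mult_distrib nat_mult_1)
  finally show ?thesis .
qed

lemma len: "k \<ge> 1 \<Longrightarrow> length (sigma k (Suc m)) + 1 = k ^ Suc m * fact (Suc m)"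
proof (induction m)
  case 0 then show ?case by simp
next
  case (Suc m)
  then show ?case using len_step[OF Suc.prems, of m] by (simp add: algebra_simps)
qed

lemma sl_cr: "sum_list (concat (replicate c (xs::nat list))) = c * sum_list xs"
  by (induction c) auto

lemma sum_step: "k \<ge> 1 \<Longrightarrow> sum_list (sigma k (Suc (Suc m))) + Suc (Suc m) = k * Suc (Suc m) * (sum_list (sigma k (Suc m)) + Suc m + 1)"
proof -
  assume k: "k \<ge> 1"
  obtain c where c: "k * Suc (Suc m) = Suc c" using k by (cases "k * Suc (Suc m)") auto
  have "sum_list (sigma k (Suc (Suc m))) + Suc (Suc m) = c * (sum_list (sigma k (Suc m)) + Suc (Suc m)) + sum_list (sigma k (Suc m)) + Suc (Suc m)"
    using c by (simp add: sl_cr)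
  also have "\<dots> = Suc c * (sum_list (sigma k (Suc m)) + Suc (Suc m))" by simp
  finally show ?thesis using c by simp
qed


lemma sumr: "k \<ge> 1 \<Longrightarrow> real (sum_list (sigma k (Suc m)) + Suc m) = real k ^ Suc m * fact (Suc m) * (\<Sum>j<Suc m. 1 / (real k ^ j * fact j))"
proof (induction m)
  case 0 then show ?case by (simp add: sum_list_replicate of_nat_diff)
next
  case (Suc m)
  have k: "real k > 0" using Suc.prems by simp
  have "real (sum_list (sigma k (Suc (Suc m))) + Suc (Suc m)) = real k * (m+2) * (real (sum_list (sigma k (Suc m)) + Suc m) + 1)"
    using sum_step[OF Suc.prems, of m] by (metis of_nat_1 of_nat_add of_nat_mult add_2_eq_Suc' of_nat_Suc)
  also have "\<dots> = real k * (m+2) * (real k ^ Suc m * fact (Suc m) * (\<Sum>j<Suc m. 1 / (real k ^ j * fact j)) + 1)"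
    using Suc by simp
  also have "\<dots> = real k ^ Suc (Suc m) * fact (Suc (Suc m)) * (\<Sum>j<Suc m. 1 / (real k ^ j * fact j)) + real k * (m+2)"
    by (simp add: algebra_simps)
  also have "real k * (m+2) = real k ^ Suc (Suc m) * fact (Suc (Suc m)) * (1 / (real k ^ Suc m * fact (Suc m)))"
    using k by (simp add: field_simps del: fact_Suc) (simp add: algebra_simps)
  also have "real k ^ Suc (Suc m) * fact (Suc (Suc m)) * (\<Sum>j<Suc m. 1 / (real k ^ j * fact j)) + \<dots> = real k ^ Suc (Suc m) * fact (Suc (Suc m)) * (\<Sum>j<Suc (Suc m). 1 / (real k ^ j * fact j))"
    by (simp only: sum.lessThan_Suc[of _ "Suc m"] distrib_left)
  finally show ?case .
qed

theorem lemma8: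
  fixes n k :: nat
  assumes "n \<ge> 1" and "k \<ge> 1"
  shows "length (sigma_bar k n) = k ^ n * fact n
         \<and> avg n k = (\<Sum>j<n. 1 / (real k ^ j * fact j))
         \<and> avg n k < exp (1 / real k)"
proof -
  obtain m where n: "n = Suc m" using assms(1) by (cases n) auto
  have L: "length (sigma_bar k n) = k ^ n * fact n"
    using len[OF assms(2), of m] n by (simp add: sigma_bar_def)
  have kp: "real k > 0" using assms(2) by simp
  have A: "avg n k = (\<Sum>j<n. 1 / (real k ^ j * fact j))"
  proof -
    have "avg n k = real (sum_list (sigma k (Suc m)) + Suc m) / (real k ^ n * fact n)"
      unfolding avg_def L using n by (simp add: sigma_bar_def of_nat_fact del: fact_Suc)
    also have "\<dots> = (\<Sum>j<n. 1 / (real k ^ j * fact j))"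
      using sumr[OF assms(2), of m] n kp
      by (simp only:) (simp del: fact_Suc power_Suc sum.lessThan_Suc)
    finally show ?thesis .
  qed
  have f: "(\<lambda>j. 1 / (real k ^ j * fact j)) = (\<lambda>j. (1 / real k) ^ j / fact j)"
    by (simp add: power_one_over)
  have "(\<Sum>j<n. 1 / (real k ^ j * fact j)) < (\<Sum>j. (1 / real k) ^ j / fact j)"
    unfolding f
    proof (rule sum_less_suminf)
    show "summable (\<lambda>j. (1 / real k) ^ j / fact j)"
      using summable_exp[of "1 / real k"] by (simp add: divide_inverse mult.commute)
  qed (use kp in auto)
  also have "\<dots> = exp (1 / real k)" by (simp add: exp_def divide_inverse mult.commute)
  finally show ?thesis using L A by simp
qed

end
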